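(* Let $t$ be a power of two, let $h:[u]\to[t]$ be a random hash function, let $S\subseteq[u]$ with $|S|<t$ be stored in a linear probing table of size $t$ using $h$, and let $q\in[u]$. Suppose that for each $\ell\in\{0,1,\dots,\log_2 t\}$ there is a number $P_\ell$ such that for every $y\in[t]$ and every $\ell$-interval $I$, \[\Pr\Big[\,|\{x\in S\setminus\{q\}: h(x)\in I\}|\ge \tfrac34 2^\ell \;\Big|\; h(q)=y\Big]\le P_\ell.\] Then the expected number of positions from $h(q)$ up to the first empty position at or after $h(q)$ (and hence the expected time to search, insert or delete $q$) is \[O\Big(1+\sum_{\ell=0}^{\log_2 t}2^\ell P_\ell\Big),\] where the constant in the $O$ is absolute.
   Context: Let $[s]=\{0,\dots,s-1\}$. Linear probing: a table of size $t$ with hash function $h:[u]\to[t]$; positions are indexed by nonnegative integers (wrap-around ignored), each either empty or holding one key. Keys of $S$ are inserted starting from an empty table; a key $x$ is inserted by scanning positions $h(x),h(x)+1,\dots$ and placing $x$ in the first empty one. Search, insertion and deletion of a key $x$ take time at most proportional to the number of positions from $h(x)$ to the first empty position at or after $h(x)$. For an integer $\ell\ge0$, an $\ell$-interval is a set of positions $[i2^\ell,(i+1)2^\ell)$ for an integer $i\ge0$. *)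

theory Defs
  imports "HOL-Probability.Probability_Mass_Function"
begin

text \<open>A linear probing table: positions are natural numbers (no wrap-around);
  each position is empty (None) or holds one key.\<close>
type_synonym lp_table = "nat \<Rightarrow> nat option"

definition first_empty :: "lp_table \<Rightarrow> nat \<Rightarrow> nat" where
  "first_empty T p = (LEAST j. p \<le> j \<and> T j = None)"

definition lp_insert :: "(nat \<Rightarrow> nat) \<Rightarrow> lp_table \<Rightarrow> nat \<Rightarrow> lp_table" where
  "lp_insert h T x = T(first_empty T (h x) := Some x)"

definition lp_build :: "(nat \<Rightarrow> nat) \<Rightarrow> nat list \<Rightarrow> lp_table" where
  "lp_build h xs = fold (\<lambda>x T. lp_insert h T x) xs (\<lambda>_. None)"

definition probe_len :: "(nat \<Rightarrow> nat) \<Rightarrow> lp_table \<Rightarrow> nat \<Rightarrow> nat" where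
  "probe_len h T q = first_empty T (h q) - h q + 1"

definition ell_interval :: "nat \<Rightarrow> nat \<Rightarrow> nat set" where
  "ell_interval l i = {i * 2 ^ l ..< (i + 1) * 2 ^ l}"

end

theory Submission
  imports Defs
begin


definition lp_inv :: "(nat\<Rightarrow>nat) \<Rightarrow> nat set \<Rightarrow> lp_table \<Rightarrow> bool" where
"lp_inv h K T \<longleftrightarrow> (\<forall>p x. T p = Some x \<longrightarrow> x \<in> K \<and> h x \<le> p \<and> (\<forall>z. h x \<le> z \<and> z < p \<longrightarrow> T z \<noteq> None))
   \<and> (\<forall>p p' x. T p = Some x \<and> T p' = Some x \<longrightarrow> p = p') \<and> finite {p. T p \<noteq> None}"

lemma fe_props:
  assumes "finite {p. T p \<noteq> None}"
  shows "T (first_empty T p) = None \<and> p \<le> first_empty T p \<and> (\<forall>z. p \<le> z \<and> z < first_empty T p \<longrightarrow> T z \<noteq> None)"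
proof -
  obtain m where m: "\<forall>n\<in>{p. T p \<noteq> None}. n < m" using assms finite_nat_set_iff_bounded by blast
  have "T (max p m) = None"
  proof (rule ccontr)
    assume "T (max p m) \<noteq> None"
    then have "max p m \<in> {p. T p \<noteq> None}" by simp
    with m have "max p m < m" by (rule bspec)
    then show False by simp
  qed
  then have ex: "\<exists>j. p \<le> j \<and> T j = None"
    by (intro exI[of _ "max p m"]) simp
  have 1: "p \<le> first_empty T p \<and> T (first_empty T p) = None"
    unfolding first_empty_def by (rule LeastI_ex[OF ex])
  have 2: "\<forall>z. p \<le> z \<and> z < first_empty T p \<longrightarrow> T z \<noteq> None"
  proof (intro allI impI)
    fix z assume z: "p \<le> z \<and> z < first_empty T p"
    then have "\<not> (p \<le> z \<and> T z = None)"
      unfolding first_empty_def by (intro not_less_Least) simp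
    then show "T z \<noteq> None" using z by simp
  qed
  show ?thesis using 1 2 by simp
qed

lemma inv_insert:
  assumes "lp_inv h K T" "x \<notin> K"
  shows "lp_inv h (insert x K) (lp_insert h T x)"
proof -
  let ?f = "first_empty T (h x)"
  let ?T = "T(?f := Some x)"
  have fin: "finite {p. T p \<noteq> None}" using assms(1) unfolding lp_inv_def by (elim conjE)
  note fe = fe_props[OF fin, of "h x"]
  have I1: "\<forall>p y. T p = Some y \<longrightarrow> y \<in> K \<and> h y \<le> p \<and> (\<forall>z. h y \<le> z \<and> z < p \<longrightarrow> T z \<noteq> None)"
    using assms(1) unfolding lp_inv_def by (elim conjE)
  have I2: "\<forall>p p' y. T p = Some y \<and> T p' = Some y \<longrightarrow> p = p'"
    using assms(1) unfolding lp_inv_def by (elim conjE)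
  have sub: "{p. ?T p \<noteq> None} \<subseteq> insert ?f {p. T p \<noteq> None}" by auto
  have mono: "T z \<noteq> None \<Longrightarrow> ?T z \<noteq> None" for z by auto
  have A: "y \<in> insert x K \<and> h y \<le> p \<and> (\<forall>z. h y \<le> z \<and> z < p \<longrightarrow> ?T z \<noteq> None)"
    if "?T p = Some y" for p y
  proof (cases "p = ?f")
    case True
    then have yx: "y = x" using that by simp
    have fe2: "h x \<le> ?f" using fe by (elim conjE)
    have fe3: "\<forall>z. h x \<le> z \<and> z < ?f \<longrightarrow> T z \<noteq> None" using fe by (elim conjE)
    show ?thesis using True yx fe2 fe3 by auto
  next
    case False
    then have "T p = Some y" using that by simp
    then have "y \<in> K \<and> h y \<le> p \<and> (\<forall>z. h y \<le> z \<and> z < p \<longrightarrow> T z \<noteq> None)"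
      using I1 by blast
    then show ?thesis by auto
  qed
  have xK: "T p = Some x \<Longrightarrow> False" for p using I1[rule_format, of p x] assms(2) by simp
  have B: "p = p'" if "?T p = Some y" "?T p' = Some y" for p p' y
  proof (cases "p = ?f")
    case True
    then have y: "y = x" using that(1) by simp
    show ?thesis
    proof (rule ccontr)
      assume "p \<noteq> p'"
      then have "T p' = Some x" using that(2) True y by simp
      then show False by (rule xK)
    qed
  next
    case False
    then have Tp: "T p = Some y" using that(1) by simp
    show ?thesis
    proof (cases "p' = ?f")
      case True
      then have "y = x" using that(2) by simp
      then show ?thesis using Tp xK by blast
    next
      case False
      then have "T p' = Some y" using that(2) by simp
      then show ?thesis using Tp I2 by blast
    qed
  qed
  have F: "finite {p. ?T p \<noteq> None}" using finite_subset[OF sub] fin by simp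
  have G1: "\<forall>p y. ?T p = Some y \<longrightarrow> y \<in> insert x K \<and> h y \<le> p \<and> (\<forall>z. h y \<le> z \<and> z < p \<longrightarrow> ?T z \<noteq> None)"
    by (intro allI impI) (rule A)
  have G2: "\<forall>p p' y. ?T p = Some y \<and> ?T p' = Some y \<longrightarrow> p = p'" by (intro allI impI, elim conjE, rule B)
  show ?thesis
    unfolding lp_inv_def lp_insert_def using G1 G2 F by (intro conjI)
qed

lemma inv_build:
  assumes "distinct xs"
  shows "lp_inv h (set xs) (lp_build h xs)"
  using assms
proof (induction xs rule: rev_induct)
  case Nil
  then show ?case by (simp add: lp_inv_def lp_build_def)
next
  case (snoc x xs)
  have "lp_build h (xs @ [x]) = lp_insert h (lp_build h xs) x"
    by (simp add: lp_build_def)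
  have "x \<notin> set xs" "distinct xs" using snoc.prems by auto
  then have "lp_inv h (insert x (set xs)) (lp_insert h (lp_build h xs) x)"
    using inv_insert snoc.IH by blast
  then show ?case using \<open>lp_build h (xs @ [x]) = lp_insert h (lp_build h xs) x\<close> by simp
qed



definition heavy :: "nat set \<Rightarrow> nat \<Rightarrow> (nat\<Rightarrow>nat) \<Rightarrow> nat \<Rightarrow> nat \<Rightarrow> bool" where
"heavy S q h l j \<longleftrightarrow> 3 / 4 * 2 ^ l \<le> real (card {x \<in> S - {q}. h x \<in> ell_interval l j})"

definition nbr :: "nat \<Rightarrow> nat \<Rightarrow> nat set" where
"nbr y l = {j. y div 2^l \<le> j + 10 \<and> j \<le> y div 2^l + 4}"

lemma finite_nbr: "finite (nbr y l)"
  by (rule finite_subset[of _ "{..y div 2^l + 4}"]) (auto simp: nbr_def)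

lemma card_nbr: "card (nbr y l) \<le> 15"
proof -
  have "nbr y l \<subseteq> {y div 2^l - 10 .. y div 2^l + 4}" by (auto simp: nbr_def)
  then have "card (nbr y l) \<le> card {y div 2^l - 10 .. y div 2^l + 4}"
    by (intro card_mono) auto
  also have "\<dots> \<le> 15" by simp
  finally show ?thesis .
qed

lemma div_bounds:
  assumes "(0::nat) < M"
  shows "x div M * M \<le> x \<and> x < (x div M + 1) * M"
proof -
  have e: "x div M * M + x mod M = x" by (rule div_mult_mod_eq)
  have m: "x mod M < M" using assms by (rule mod_less_divisor)
  have d: "(x div M + 1) * M = x div M * M + M" by (simp add: algebra_simps)
  show ?thesis using e m d by linarith
qed

lemma in_ell: "x \<in> ell_interval l (x div 2^l)"
  using div_bounds[of "2^l" x] unfolding ell_interval_def by simp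

lemma exl: "5 \<le> (R::nat) \<Longrightarrow> \<exists>l. 5 * 2^l \<le> R \<and> R < 10 * 2^l"
proof (induction R rule: less_induct)
  case (less R)
  show ?case
  proof (cases "R < 10")
    case True
    then show ?thesis using less.prems by (intro exI[of _ 0]) simp
  next
    case False
    then have "5 \<le> R div 2" "R div 2 < R" by auto
    then obtain l where l: "5 * 2^l \<le> R div 2" "R div 2 < 10 * 2^l" using less.IH by blast
    have "5 * 2^Suc l \<le> R" "R < 10 * 2^Suc l" using l by auto
    then show ?thesis by blast
  qed
qed

lemma count_run:
  assumes inv: "lp_inv h S T" and fin: "finite S"
    and start: "a = 0 \<or> T (a-1) = None"
    and full: "\<forall>z. a \<le> z \<and> z \<le> c \<longrightarrow> T z \<noteq> None"
  shows "c + 1 - a \<le> card {x\<in>S. a \<le> h x \<and> h x \<le> c}"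
proof -
  have I1: "\<forall>p y. T p = Some y \<longrightarrow> y \<in> S \<and> h y \<le> p \<and> (\<forall>z. h y \<le> z \<and> z < p \<longrightarrow> T z \<noteq> None)"
    using inv unfolding lp_inv_def by (elim conjE)
  have I2: "\<forall>p p' y. T p = Some y \<and> T p' = Some y \<longrightarrow> p = p'"
    using inv unfolding lp_inv_def by (elim conjE)
  define g where "g z = the (T z)" for z
  have Tg: "T z = Some (g z)" if "a \<le> z" "z \<le> c" for z
    using full that unfolding g_def by auto
  have inj: "inj_on g {a..c}"
  proof (rule inj_onI)
    fix z z' assume z: "z \<in> {a..c}" "z' \<in> {a..c}" "g z = g z'"
    then have "T z = Some (g z)" "T z' = Some (g z)" using Tg by auto
    then show "z = z'" using I2 by blast
  qed
  have img: "g ` {a..c} \<subseteq> {x\<in>S. a \<le> h x \<and> h x \<le> c}"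
  proof
    fix y assume "y \<in> g ` {a..c}"
    then obtain z where z: "a \<le> z" "z \<le> c" "y = g z" by auto
    then have Tz: "T z = Some y" using Tg by simp
    have y1: "y \<in> S" "h y \<le> z" and y2: "\<forall>w. h y \<le> w \<and> w < z \<longrightarrow> T w \<noteq> None"
      using I1[rule_format, OF Tz] by auto
    have "a \<le> h y"
    proof (rule ccontr)
      assume "\<not> a \<le> h y"
      then have "a \<noteq> 0" "h y \<le> a - 1" "a - 1 < z" using z by auto
      then have "T (a-1) \<noteq> None" using y2 by blast
      then show False using start \<open>a \<noteq> 0\<close> by auto
    qed
    then show "y \<in> {x\<in>S. a \<le> h x \<and> h x \<le> c}" using y1 z by auto
  qed
  have "card {a..c} \<le> card {x\<in>S. a \<le> h x \<and> h x \<le> c}"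
    using card_inj_on_le[OF inj img] fin by simp
  then show ?thesis by simp
qed



lemma det:
  assumes inv: "lp_inv h S T" and fin: "finite S" and cS: "card S < 2^k"
  shows "real (first_empty T (h q) - h q + 1)
    \<le> 5 + 10 * (\<Sum>l\<le>k. 2^l * (\<Sum>j\<in>nbr (h q) l. if heavy S q h l j then 1 else 0))"
proof -
  define p where "p = h q"
  define f where "f = first_empty T p"
  have finT: "finite {p. T p \<noteq> None}" using inv unfolding lp_inv_def by (elim conjE)
  have fe1: "T f = None" and fe2: "p \<le> f" and fe3: "\<forall>z. p \<le> z \<and> z < f \<longrightarrow> T z \<noteq> None"
    using fe_props[OF finT, of p] unfolding f_def by auto
  define RHS where "RHS = (\<Sum>l\<le>k. 2^l * (\<Sum>j\<in>nbr p l. if heavy S q h l j then 1 else 0::real))"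
  have inner_nn: "0 \<le> (\<Sum>j\<in>nbr p l. if heavy S q h l j then 1 else 0::real)" for l
    by (rule sum_nonneg) simp
  have RHS_nn: "0 \<le> RHS" unfolding RHS_def
    by (rule sum_nonneg) (simp add: inner_nn)
  have main: "real (f - p + 1) \<le> 5 + 10 * RHS"
  proof (cases "f = p")
    case True
    then show ?thesis using RHS_nn by simp
  next
    case False
    then have pf: "p < f" using fe2 by simp
    define Q where "Q = (\<lambda>a. a \<le> p \<and> (\<forall>z. a \<le> z \<and> z \<le> p \<longrightarrow> T z \<noteq> None))"
    have Qp: "Q p" unfolding Q_def using fe3 pf by auto
    define a where "a = (LEAST a. Q a)"
    have Qa: "Q a" unfolding a_def using Qp by (rule LeastI)
    then have ap: "a \<le> p" and afull: "\<forall>z. a \<le> z \<and> z \<le> p \<longrightarrow> T z \<noteq> None"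
      unfolding Q_def by auto
    have start: "a = 0 \<or> T (a-1) = None"
    proof (rule ccontr)
      assume "\<not> (a = 0 \<or> T (a-1) = None)"
      then have a0: "a \<noteq> 0" and Ta: "T (a-1) \<noteq> None" by auto
      have "Q (a-1)" unfolding Q_def
      proof (intro conjI allI impI)
        show "a - 1 \<le> p" using ap by simp
      next
        fix z assume "a - 1 \<le> z \<and> z \<le> p"
        then show "T z \<noteq> None" using afull Ta by (cases "z = a - 1") auto
      qed
      then have "a \<le> a - 1" unfolding a_def by (rule Least_le)
      then show False using a0 by simp
    qed
    have full: "\<forall>z. a \<le> z \<and> z \<le> f - 1 \<longrightarrow> T z \<noteq> None"
    proof (intro allI impI)
      fix z assume z: "a \<le> z \<and> z \<le> f - 1"
      show "T z \<noteq> None"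
      proof (cases "z \<le> p")
        case True then show ?thesis using afull z by blast
      next
        case False then show ?thesis using fe3 z pf by auto
      qed
    qed
    define R where "R = f - a"
    have Rge: "f - p \<le> R" unfolding R_def using ap by simp
    have "f - 1 + 1 - a \<le> card {x\<in>S. a \<le> h x \<and> h x \<le> f - 1}"
      by (rule count_run[OF inv fin start full])
    also have "\<dots> \<le> card S" by (rule card_mono[OF fin]) auto
    finally have RS: "R < 2^k" unfolding R_def using cS pf ap by simp
    show ?thesis
    proof (cases "R < 5")
      case True
      then have "f - p + 1 \<le> 5" using Rge by simp
      then have "real (f - p + 1) \<le> 5" by simp
      then show ?thesis using RHS_nn by simp
    next
      case False
      then have "5 \<le> R" by simp
      then obtain l where l1: "5 * 2^l \<le> R" and l2: "R < 10 * 2^l" using exl by blast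
      define M where "M = (2::nat)^l"
      have M0: "0 < M" unfolding M_def by simp
      have "(2::nat)^l < 2^k" using l1 RS by linarith
      then have "l < k" by simp
      then have lk: "l \<le> k" by simp
      define ja where "ja = a div M"
      have ja1: "ja * M \<le> a" and ja2: "a < (ja + 1) * M"
        using div_bounds[OF M0, of a] unfolding ja_def by auto
      define c where "c = (ja + 5) * M - 1"
      have cexp: "(ja + 5) * M = ja * M + 5 * M" "(ja + 1) * M = ja * M + M" by (simp_all add: algebra_simps)
      have l1': "5 * M \<le> R" and l2': "R < 10 * M" using l1 l2 unfolding M_def by auto
      have aR: "a + R = f" unfolding R_def using ap pf by simp
      have cf: "c \<le> f - 1" unfolding c_def using cexp ja1 l1' aR by linarith
      have ac: "a \<le> c" unfolding c_def using cexp ja2 M0 by linarith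
      have fullc: "\<forall>z. a \<le> z \<and> z \<le> c \<longrightarrow> T z \<noteq> None" using full cf by auto
      define X where "X = {x\<in>S. a \<le> h x \<and> h x \<le> c}"
      have "c + 1 - a \<le> card X" unfolding X_def by (rule count_run[OF inv fin start fullc])
      moreover have "4 * M + 1 \<le> c + 1 - a" unfolding c_def using cexp ja2 M0 by linarith
      ultimately have cX: "4 * M + 1 \<le> card X" by linarith
      have finX: "finite X" unfolding X_def using fin by simp
      have "card X - 1 \<le> card (X - {q})" by (simp add: card_Diff_singleton_if)
      then have cXq: "4 * M \<le> card (X - {q})" using cX by linarith
      define Y where "Y = (\<lambda>j. {x \<in> S - {q}. h x \<in> ell_interval l j})"
      have sub: "X - {q} \<subseteq> (\<Union>j\<in>{ja..ja+4}. Y j)"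
      proof
        fix x assume x: "x \<in> X - {q}"
        then have xS: "x \<in> S - {q}" and hx1: "a \<le> h x" and hx2: "h x \<le> c" unfolding X_def by auto
        have pos: "0 < (ja + 5) * M" using M0 by simp
        have "h x < (ja + 5) * M" using hx2 pos unfolding c_def by linarith
        then have j2: "h x div M < ja + 5" by (rule less_mult_imp_div_less)
        have j1: "ja \<le> h x div M" unfolding ja_def using hx1 by (rule div_le_mono)
        have "x \<in> Y (h x div M)" unfolding Y_def M_def using xS in_ell by simp
        then show "x \<in> (\<Union>j\<in>{ja..ja+4}. Y j)" using j1 j2
          by (intro UN_I[of "h x div M"]) auto
      qed
      have finU: "finite (\<Union>j\<in>{ja..ja+4}. Y j)"
        by (rule finite_subset[of _ S]) (auto simp: Y_def fin)
      have "card (X - {q}) \<le> card (\<Union>j\<in>{ja..ja+4}. Y j)" by (rule card_mono[OF finU sub])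
      also have "\<dots> \<le> (\<Sum>j\<in>{ja..ja+4}. card (Y j))" by (rule card_UN_le) simp
      finally have sumY: "4 * M \<le> (\<Sum>j\<in>{ja..ja+4}. card (Y j))" using cXq by linarith
      have "\<exists>j\<in>{ja..ja+4}. heavy S q h l j"
      proof (rule ccontr)
        assume "\<not> (\<exists>j\<in>{ja..ja+4}. heavy S q h l j)"
        then have lt: "\<forall>j\<in>{ja..ja+4}. real (card (Y j)) < 3/4 * real M"
          unfolding heavy_def Y_def M_def by auto
        have "(\<Sum>j\<in>{ja..ja+4}. real (card (Y j))) < (\<Sum>j\<in>{ja..ja+4}. 3/4 * real M)"
          by (rule sum_strict_mono) (use lt in auto)
        also have "\<dots> = 5 * (3/4 * real M)" by simp
        finally have "real (\<Sum>j\<in>{ja..ja+4}. card (Y j)) < 15/4 * real M" by simp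
        moreover have "real (4 * M) \<le> real (\<Sum>j\<in>{ja..ja+4}. card (Y j))" using sumY by linarith
        ultimately show False using M0 by simp
      qed
      then obtain j where j: "ja \<le> j" "j \<le> ja + 4" "heavy S q h l j" by auto
      have "p < (ja + 11) * M"
      proof -
        have e11: "(ja + 11) * M = (ja + 1) * M + 10 * M" by (simp add: algebra_simps)
        have "p < a + R" using aR pf by simp
        then show ?thesis using ja2 l2' e11 by linarith
      qed
      then have "p div M < ja + 11" by (rule less_mult_imp_div_less)
      moreover have "ja \<le> p div M" unfolding ja_def using ap by (rule div_le_mono)
      ultimately have jn: "j \<in> nbr p l" unfolding nbr_def M_def using j by auto
      have "1 \<le> (\<Sum>j\<in>nbr p l. if heavy S q h l j then 1 else 0::real)"
      proof -
        have "(if heavy S q h l j then 1 else 0::real) \<le> (\<Sum>j\<in>nbr p l. if heavy S q h l j then 1 else 0::real)"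
          by (rule member_le_sum[OF jn]) (simp_all add: finite_nbr)
        then show ?thesis using j by simp
      qed
      then have "2^l * 1 \<le> 2^l * (\<Sum>j\<in>nbr p l. if heavy S q h l j then 1 else 0::real)"
        by (intro mult_left_mono) auto
      also have "\<dots> \<le> RHS" unfolding RHS_def
        by (rule member_le_sum[of l]) (use lk inner_nn in auto)
      finally have RM: "real M \<le> RHS" unfolding M_def by simp
      have "f - p + 1 \<le> 10 * M" using Rge l2' by linarith
      then have "real (f - p + 1) \<le> 10 * real M" by linarith
      then show ?thesis using RM by linarith
    qed
  qed
  then show ?thesis unfolding p_def f_def RHS_def by simp
qed



lemma cond_prob_eq:
  assumes "set_pmf p \<inter> s \<noteq> {}"
  shows "measure_pmf.prob (cond_pmf p s) A = measure_pmf.prob p (s \<inter> A) / measure_pmf.prob p s"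
proof -
  have "measure_pmf (cond_pmf p s) = uniform_measure (measure_pmf p) s"
    by (rule cond_pmf.rep_eq[OF assms])
  moreover have "emeasure (measure_pmf p) s \<noteq> 0"
    using assms by (simp add: emeasure_measure_pmf_not_zero)
  ultimately show ?thesis
    by (simp add: measure_pmf.emeasure_finite)
qed

lemma cond_bound:
  assumes "set_pmf p \<inter> s \<noteq> {} \<Longrightarrow> measure_pmf.prob (cond_pmf p s) A \<le> P"
  shows "measure_pmf.prob p (s \<inter> A) \<le> measure_pmf.prob p s * P"
proof (cases "set_pmf p \<inter> s = {}")
  case True
  then have "measure_pmf.prob p s = 0" by (simp add: measure_pmf_zero_iff)
  moreover have "measure_pmf.prob p (s \<inter> A) \<le> measure_pmf.prob p s"
    by (rule measure_pmf.finite_measure_mono) auto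
  ultimately show ?thesis by simp
next
  case False
  then have pos: "0 < measure_pmf.prob p s"
    using measure_measure_pmf_not_zero[of p s] by (simp add: zero_less_measure_iff)
  have "measure_pmf.prob p (s \<inter> A) / measure_pmf.prob p s \<le> P"
    using assms False cond_prob_eq[OF False] by simp
  then show ?thesis using pos by (simp add: divide_le_eq mult.commute)
qed

theorem theorem4:
  shows "\<exists>C::real. \<forall>(t::nat) (k::nat) (u::nat) (H::(nat \<Rightarrow> nat) pmf) (S::nat set)
      (xs::nat list) (q::nat) (P::nat \<Rightarrow> real).
    t = 2 ^ k \<and> S \<subseteq> {..<u} \<and> card S < t \<and> distinct xs \<and> set xs = S \<and> q < u \<and>
    (\<forall>h\<in>set_pmf H. \<forall>x<u. h x < t) \<and>
    (\<forall>l\<le>k. \<forall>y<t. \<forall>i.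
        set_pmf H \<inter> {h. h q = y} \<noteq> {} \<longrightarrow>
        measure_pmf.prob (cond_pmf H {h. h q = y})
          {h. real (card {x \<in> S - {q}. h x \<in> ell_interval l i}) \<ge> 3 / 4 * 2 ^ l} \<le> P l)
    \<longrightarrow> measure_pmf.expectation H (\<lambda>h. real (probe_len h (lp_build h xs) q))
          \<le> C * (1 + (\<Sum>l\<le>k. 2 ^ l * P l))"
proof (intro exI[of _ 150] allI impI, elim conjE)
  fix t k u :: nat and H :: "(nat \<Rightarrow> nat) pmf" and S :: "nat set" and xs :: "nat list"
    and q :: nat and P :: "nat \<Rightarrow> real"
  assume tk: "t = 2 ^ k" and Su: "S \<subseteq> {..<u}" and cS: "card S < t" and dxs: "distinct xs"
    and sxs: "set xs = S" and qu: "q < u" and ht: "\<forall>h\<in>set_pmf H. \<forall>x<u. h x < t"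
    and hyp: "\<forall>l\<le>k. \<forall>y<t. \<forall>i.
        set_pmf H \<inter> {h. h q = y} \<noteq> {} \<longrightarrow>
        measure_pmf.prob (cond_pmf H {h. h q = y})
          {h. real (card {x \<in> S - {q}. h x \<in> ell_interval l i}) \<ge> 3 / 4 * 2 ^ l} \<le> P l"
  define Hv where "Hv = (\<lambda>l i. {h. real (card {x \<in> S - {q}. h x \<in> ell_interval l i}) \<ge> 3 / 4 * (2::real) ^ l})"
  define B where "B = (\<lambda>y. {h::nat\<Rightarrow>nat. h q = y})"
  define G where "G = (\<lambda>h. 5 + 10 * (\<Sum>l\<le>k. 2^l * (\<Sum>y<t. \<Sum>j\<in>nbr y l. indicator (B y \<inter> Hv l j) h)) :: real)"
  have finS: "finite S" using Su finite_subset by blast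
  have cSk: "card S < 2^k" using cS tk by simp
  have pw: "real (probe_len h (lp_build h xs) q) \<le> G h" if hH: "h \<in> set_pmf H" for h
  proof -
    have inv: "lp_inv h S (lp_build h xs)" using inv_build[OF dxs, of h] sxs by simp
    have hq: "h q < t" using ht hH qu by blast
    have eq: "(\<Sum>y<t. \<Sum>j\<in>nbr y l. indicator (B y \<inter> Hv l j) h)
        = (\<Sum>j\<in>nbr (h q) l. if heavy S q h l j then 1 else 0::real)" for l
    proof -
      have "(\<Sum>y<t. \<Sum>j\<in>nbr y l. indicator (B y \<inter> Hv l j) h)
          = (\<Sum>y<t. if y = h q then (\<Sum>j\<in>nbr y l. if heavy S q h l j then 1 else 0::real) else 0)"
      proof (intro sum.cong refl)
        fix y
        have ind: "indicator (B y \<inter> Hv l j) h = (if y = h q then (if heavy S q h l j then 1 else 0::real) else 0)" for j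
          by (simp add: B_def Hv_def heavy_def indicator_def)
        show "(\<Sum>j\<in>nbr y l. indicator (B y \<inter> Hv l j) h)
          = (if y = h q then (\<Sum>j\<in>nbr y l. if heavy S q h l j then 1 else 0::real) else 0)"
          unfolding ind by (cases "y = h q") simp_all
      qed
      also have "\<dots> = (\<Sum>j\<in>nbr (h q) l. if heavy S q h l j then 1 else 0::real)"
        using hq by (simp only: sum.delta[OF finite_lessThan] lessThan_iff if_True)
      finally show ?thesis .
    qed
    show ?thesis unfolding G_def eq probe_len_def
      using det[OF inv finS cSk, of q] by simp
  qed
  have Pnn: "0 \<le> P l" if "l \<le> k" for l
  proof -
    obtain h0 where h0: "h0 \<in> set_pmf H" using set_pmf_not_empty[of H] by blast
    then have "h0 q < t" using ht qu by blast
    moreover have "set_pmf H \<inter> {h. h q = h0 q} \<noteq> {}" using h0 by blast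
    ultimately have "measure_pmf.prob (cond_pmf H {h. h q = h0 q}) (Hv l 0) \<le> P l"
      using hyp that unfolding Hv_def by blast
    then show ?thesis using measure_nonneg order_trans by blast
  qed
  have trm: "measure_pmf.prob H (B y \<inter> Hv l j) \<le> measure_pmf.prob H (B y) * P l"
    if "l \<le> k" "y < t" for l y j
    unfolding B_def by (rule cond_bound) (use hyp that in \<open>auto simp: Hv_def\<close>)
  have sumB: "(\<Sum>y<t. measure_pmf.prob H (B y)) \<le> 1"
  proof -
    have "(\<Sum>y<t. measure_pmf.prob H (B y)) = measure_pmf.prob H (\<Union>y<t. B y)"
      by (rule measure_pmf.finite_measure_finite_Union[symmetric])
         (auto simp: B_def disjoint_family_on_def)
    also have "\<dots> \<le> 1" by (rule measure_pmf.prob_le_1)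
    finally show ?thesis .
  qed
  have intG: "integrable (measure_pmf H) G" unfolding G_def
    by (intro Bochner_Integration.integrable_add measure_pmf.integrable_const
        Bochner_Integration.integrable_mult_right Bochner_Integration.integrable_sum
        integrable_real_indicator) (simp_all add: less_top[symmetric] measure_pmf.emeasure_finite)
  have EG: "measure_pmf.expectation H G
      = 5 + 10 * (\<Sum>l\<le>k. 2^l * (\<Sum>y<t. \<Sum>j\<in>nbr y l. measure_pmf.prob H (B y \<inter> Hv l j)))"
  proof -
    have i1: "integrable (measure_pmf H) (\<lambda>h. indicator (B y \<inter> Hv l j) h :: real)" for y l j
      by (intro integrable_real_indicator) (simp_all add: less_top[symmetric] measure_pmf.emeasure_finite)
    have i2: "integrable (measure_pmf H) (\<lambda>h. \<Sum>j\<in>nbr y l. indicator (B y \<inter> Hv l j) h :: real)" for y l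
      by (intro Bochner_Integration.integrable_sum i1)
    have i3: "integrable (measure_pmf H) (\<lambda>h. \<Sum>y<t. \<Sum>j\<in>nbr y l. indicator (B y \<inter> Hv l j) h :: real)" for l
      by (intro Bochner_Integration.integrable_sum i2)
    have i4: "integrable (measure_pmf H) (\<lambda>h. 2^l * (\<Sum>y<t. \<Sum>j\<in>nbr y l. indicator (B y \<inter> Hv l j) h :: real))" for l
      by (intro Bochner_Integration.integrable_mult_right i3)
    have i5: "integrable (measure_pmf H) (\<lambda>h. \<Sum>l\<le>k. 2^l * (\<Sum>y<t. \<Sum>j\<in>nbr y l. indicator (B y \<inter> Hv l j) h :: real))"
      by (intro Bochner_Integration.integrable_sum i4)
    have i6: "integrable (measure_pmf H) (\<lambda>h. 10 * (\<Sum>l\<le>k. 2^l * (\<Sum>y<t. \<Sum>j\<in>nbr y l. indicator (B y \<inter> Hv l j) h :: real)))"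
      by (intro Bochner_Integration.integrable_mult_right i5)
    have e1: "measure_pmf.expectation H G = measure_pmf.expectation H (\<lambda>h. 5::real)
        + measure_pmf.expectation H (\<lambda>h. 10 * (\<Sum>l\<le>k. 2^l * (\<Sum>y<t. \<Sum>j\<in>nbr y l. indicator (B y \<inter> Hv l j) h :: real)))"
      unfolding G_def by (rule Bochner_Integration.integral_add[OF measure_pmf.integrable_const i6])
    have e2: "measure_pmf.expectation H (\<lambda>h. 5::real) = 5" by simp
    have e3: "measure_pmf.expectation H (\<lambda>h. 10 * (\<Sum>l\<le>k. 2^l * (\<Sum>y<t. \<Sum>j\<in>nbr y l. indicator (B y \<inter> Hv l j) h :: real)))
       = 10 * (\<Sum>l\<le>k. 2^l * (\<Sum>y<t. \<Sum>j\<in>nbr y l. measure_pmf.expectation H (indicator (B y \<inter> Hv l j) :: _ \<Rightarrow> real)))"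
      by (simp only: Bochner_Integration.integral_mult_right_zero Bochner_Integration.integral_sum[OF i4]
          Bochner_Integration.integral_sum[OF i2] Bochner_Integration.integral_sum[OF i1])
    have e4: "measure_pmf.expectation H (indicator A :: _ \<Rightarrow> real) = measure_pmf.prob H A" for A
      by simp
    show ?thesis using e1 e2 e3 e4 by simp
  qed
  have inner: "(\<Sum>y<t. \<Sum>j\<in>nbr y l. measure_pmf.prob H (B y \<inter> Hv l j)) \<le> 15 * P l"
    if lk: "l \<le> k" for l
  proof -
    have "(\<Sum>y<t. \<Sum>j\<in>nbr y l. measure_pmf.prob H (B y \<inter> Hv l j))
        \<le> (\<Sum>y<t. 15 * (measure_pmf.prob H (B y) * P l))"
    proof (rule sum_mono)
      fix y assume "y \<in> {..<t}"
      then have yt: "y < t" by simp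
      have "(\<Sum>j\<in>nbr y l. measure_pmf.prob H (B y \<inter> Hv l j))
          \<le> (\<Sum>j\<in>nbr y l. measure_pmf.prob H (B y) * P l)"
        by (rule sum_mono) (rule trm[OF lk yt])
      also have "\<dots> = real (card (nbr y l)) * (measure_pmf.prob H (B y) * P l)" by simp
      also have "\<dots> \<le> 15 * (measure_pmf.prob H (B y) * P l)"
        by (rule mult_right_mono) (use card_nbr[of y l] Pnn[OF lk] in auto)
      finally show "(\<Sum>j\<in>nbr y l. measure_pmf.prob H (B y \<inter> Hv l j))
          \<le> 15 * (measure_pmf.prob H (B y) * P l)" .
    qed
    also have "\<dots> = 15 * P l * (\<Sum>y<t. measure_pmf.prob H (B y))"
      by (simp add: sum_distrib_left sum_distrib_right mult_ac)
    also have "\<dots> \<le> 15 * P l * 1"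
      by (rule mult_left_mono[OF sumB]) (use Pnn[OF lk] in simp)
    finally show ?thesis by simp
  qed
  have "measure_pmf.expectation H (\<lambda>h. real (probe_len h (lp_build h xs) q))
      \<le> measure_pmf.expectation H G"
  proof (rule integral_mono_AE'[OF intG])
    show "AE h in measure_pmf H. real (probe_len h (lp_build h xs) q) \<le> G h"
      by (rule AE_pmfI) (rule pw)
    show "AE h in measure_pmf H. 0 \<le> G h"
    proof (rule AE_pmfI)
      fix h
      have "0 \<le> (\<Sum>l\<le>k. 2^l * (\<Sum>y<t. \<Sum>j\<in>nbr y l. indicator (B y \<inter> Hv l j) h :: real))"
        by (intro sum_nonneg mult_nonneg_nonneg) auto
      then show "0 \<le> G h" unfolding G_def by simp
    qed
  qed
  also have "\<dots> \<le> 5 + 10 * (\<Sum>l\<le>k. 2^l * (15 * P l))"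
    unfolding EG
    by (intro add_left_mono mult_left_mono sum_mono) (use inner in auto)
  also have "\<dots> = 5 + 150 * (\<Sum>l\<le>k. 2^l * P l)"
    by (simp add: sum_distrib_left mult_ac)
  also have "\<dots> \<le> 150 * (1 + (\<Sum>l\<le>k. 2 ^ l * P l))" by (simp add: algebra_simps)
  finally show "measure_pmf.expectation H (\<lambda>h. real (probe_len h (lp_build h xs) q))
          \<le> 150 * (1 + (\<Sum>l\<le>k. 2 ^ l * P l))" .
qed


end
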